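(* Let $f:S^1\to S^1$, $f(z)=2z\pmod 1$, let $\tau:S^1\to\mathbb{R}$ be $C^\infty$, and couple $\nu=1/\hbar$. Fix $(x,\xi)\in S^1\times\mathbb{R}$. Then, as $\hbar=1/\nu\to 0$, the family $\phi_\hbar(z)=\hat F_\nu(\varphi_{x,\xi})(z)=\varphi_{x,\xi}(f(z))\,e^{i\tau(z)/\hbar}$ has micro-support contained in $\{G_1(x,\xi),G_2(x,\xi)\}\subset S^1\times\mathbb{R}$, where $G_1,G_2$ are the two inverse branches of $F(z,s)=\big(f(z),\tfrac12 s-\tfrac12\tau'(z)\big)$, namely $G_j(x,\xi)=(y_j,\,2\xi+\tau'(y_j))$ with $y_1=\tfrac{x}{2}$, $y_2=\tfrac{x}{2}+\tfrac12$. Equivalently: if $f(y)\neq x$, or $f(y)=x$ and $\eta\neq 2\xi+\tau'(y)$, then $(y,\eta)$ is not in the micro-support.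
   Context: $S^1=\mathbb{R}/\mathbb{Z}$ is identified with $[0,1)$; $\hbar>0$ is a small parameter. For $(x,\xi)\in\mathbb{R}^2$ the periodic Gaussian wavepacket is $\varphi_{x,\xi}(z)=\sum_{k\in\mathbb{Z}}e^{\frac{i\xi(z-k)}{\hbar}}e^{-\frac{(z-k-x)^2}{4\hbar}}$. Inner product: $\langle u,v\rangle=\int_0^1\overline{u(z)}\,v(z)\,dz$. A quantity $q(\hbar)$ is $O(\hbar^\infty)$ if for every $N>0$ there are $C_N,\delta>0$ with $|q(\hbar)|\le C_N\hbar^N$ for $0<\hbar\le\delta$. A family $\phi_\hbar\in L^2(S^1)$ is micro-locally small near $(x_0,\xi_0)\in S^1\times\mathbb{R}$ if $|\langle\varphi_{y,\eta},\phi_\hbar\rangle|$ is $O(\hbar^\infty)$ uniformly for $(y,\eta)$ in a neighbourhood of $(x_0,\xi_0)$; the micro-support of $\phi_\hbar$ is the set of points near which it is not micro-locally small. The operator $\hat F_\nu$ is $\hat F_\nu(\varphi)(z)=\varphi(f(z))\,e^{i\nu\tau(z)}$. *)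

theory Defs
  imports "HOL-Analysis.Analysis"
begin

text \<open>Periodic Gaussian wavepacket on S^1 = R/Z (points represented by reals,
  functions on S^1 by 1-periodic functions on R).\<close>
definition wavepacket :: "real \<Rightarrow> real \<Rightarrow> real \<Rightarrow> real \<Rightarrow> complex" where
  "wavepacket h x \<xi> z =
     (\<Sum>\<^sub>\<infinity>k::int. exp (\<i> * complex_of_real (\<xi> * (z - of_int k) / h))
                    * complex_of_real (exp (- ((z - of_int k - x)\<^sup>2) / (4 * h))))"

definition l2_inner :: "(real \<Rightarrow> complex) \<Rightarrow> (real \<Rightarrow> complex) \<Rightarrow> complex" where
  "l2_inner u v = integral {0..1} (\<lambda>z. cnj (u z) * v z)"

definition microlocally_small :: "(real \<Rightarrow> real \<Rightarrow> complex) \<Rightarrow> real \<Rightarrow> real \<Rightarrow> bool" where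
  "microlocally_small \<phi> x0 \<xi>0 \<longleftrightarrow>
     (\<exists>e>0. \<forall>N>0. \<exists>C \<delta>. \<delta> > 0 \<and>
        (\<forall>h y \<eta>. 0 < h \<and> h \<le> \<delta> \<and> dist (y, \<eta>) (x0, \<xi>0) < e \<longrightarrow>
           norm (l2_inner (wavepacket h y \<eta>) (\<phi> h)) \<le> C * h powr N))"

definition microsupport :: "(real \<Rightarrow> real \<Rightarrow> complex) \<Rightarrow> (real \<times> real) set" where
  "microsupport \<phi> = {(x0, \<xi>0). x0 \<in> {0..<1} \<and> \<not> microlocally_small \<phi> x0 \<xi>0}"

definition doubling :: "real \<Rightarrow> real" where
  "doubling z = frac (2 * z)"

definition Fhat :: "(real \<Rightarrow> real) \<Rightarrow> real \<Rightarrow> (real \<Rightarrow> complex) \<Rightarrow> real \<Rightarrow> complex" where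
  "Fhat \<tau> \<nu> \<phi> z = \<phi> (doubling z) * exp (\<i> * complex_of_real (\<nu> * \<tau> z))"

definition smooth_fun :: "(real \<Rightarrow> real) \<Rightarrow> bool" where
  "smooth_fun \<tau> \<longleftrightarrow> (\<forall>n z. ((deriv ^^ n) \<tau>) differentiable (at z))"

end

theory Submission
  imports Defs
begin

definition bdd_fam :: "'p set \<Rightarrow> real set \<Rightarrow> ('p \<Rightarrow> real \<Rightarrow> complex) \<Rightarrow> bool" where
  "bdd_fam P W u \<longleftrightarrow> (\<exists>B. \<forall>p\<in>P. \<forall>z\<in>W. norm (u p z) \<le> B) \<and> (\<forall>p\<in>P. continuous_on W (u p))"

fun Sn :: "'p set \<Rightarrow> real set \<Rightarrow> nat \<Rightarrow> ('p \<Rightarrow> real \<Rightarrow> complex) \<Rightarrow> bool" where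
  "Sn P W 0 u = bdd_fam P W u"
| "Sn P W (Suc n) u = (bdd_fam P W u \<and> (\<exists>u'. (\<forall>p\<in>P. \<forall>z\<in>W. (u p has_vector_derivative u' p z) (at z within W)) \<and> Sn P W n u'))"

lemma Sn_bdd: "Sn P W n u \<Longrightarrow> bdd_fam P W u"
  by (cases n) auto

lemma Sn_mono: "Sn P W (Suc n) u \<Longrightarrow> Sn P W n u"
proof (induction n arbitrary: u)
  case 0 then show ?case by auto
next
  case (Suc n)
  then show ?case by (metis Sn.simps(2))
qed

lemma Sn_mono_le: "Sn P W n u \<Longrightarrow> m \<le> n \<Longrightarrow> Sn P W m u"
proof (induction n)
  case 0 then show ?case by simp
next
  case (Suc n) then show ?case using Sn_mono le_Suc_eq by blast
qed

lemma bdd_fam_add: "bdd_fam P W u \<Longrightarrow> bdd_fam P W v \<Longrightarrow> bdd_fam P W (\<lambda>p z. u p z + v p z)"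
proof -
  assume a: "bdd_fam P W u" "bdd_fam P W v"
  then obtain B1 B2 where b: "\<forall>p\<in>P. \<forall>z\<in>W. norm (u p z) \<le> B1" "\<forall>p\<in>P. \<forall>z\<in>W. norm (v p z) \<le> B2"
    unfolding bdd_fam_def by blast
  have "\<forall>p\<in>P. \<forall>z\<in>W. norm (u p z + v p z) \<le> B1 + B2"
    using b by (smt (verit) norm_triangle_ineq)
  then show ?thesis using a unfolding bdd_fam_def by (auto intro: continuous_on_add)
qed

lemma bdd_fam_mult: "bdd_fam P W u \<Longrightarrow> bdd_fam P W v \<Longrightarrow> bdd_fam P W (\<lambda>p z. u p z * v p z)"
proof -
  assume a: "bdd_fam P W u" "bdd_fam P W v"
  then obtain B1 B2 where b: "\<forall>p\<in>P. \<forall>z\<in>W. norm (u p z) \<le> B1" "\<forall>p\<in>P. \<forall>z\<in>W. norm (v p z) \<le> B2"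
    unfolding bdd_fam_def by blast
  have "\<forall>p\<in>P. \<forall>z\<in>W. norm (u p z * v p z) \<le> max B1 0 * max B2 0"
  proof (intro ballI)
    fix p z assume "p \<in> P" "z \<in> W"
    then have "norm (u p z) \<le> max B1 0" "norm (v p z) \<le> max B2 0" using b by force+
    then show "norm (u p z * v p z) \<le> max B1 0 * max B2 0"
      by (simp add: norm_mult mult_mono')
  qed
  then show ?thesis using a unfolding bdd_fam_def by (auto intro: continuous_on_mult)
qed

lemma Sn_add: "Sn P W n u \<Longrightarrow> Sn P W n v \<Longrightarrow> Sn P W n (\<lambda>p z. u p z + v p z)"
proof (induction n arbitrary: u v)
  case 0 then show ?case by (simp add: bdd_fam_add)
next
  case (Suc n)
  from Suc.prems obtain u' v' where
    u: "\<forall>p\<in>P. \<forall>z\<in>W. (u p has_vector_derivative u' p z) (at z within W)" "Sn P W n u'" and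
    v: "\<forall>p\<in>P. \<forall>z\<in>W. (v p has_vector_derivative v' p z) (at z within W)" "Sn P W n v'"
    by auto
  have "\<forall>p\<in>P. \<forall>z\<in>W. ((\<lambda>z. u p z + v p z) has_vector_derivative (u' p z + v' p z)) (at z within W)"
    using u(1) v(1) by (auto intro!: derivative_intros)
  moreover have "Sn P W n (\<lambda>p z. u' p z + v' p z)" using Suc.IH u(2) v(2) by blast
  ultimately show ?case using Suc.prems by (auto intro!: bdd_fam_add exI[of _ "\<lambda>p z. u' p z + v' p z"])
qed

lemma Sn_mult: "Sn P W n u \<Longrightarrow> Sn P W n v \<Longrightarrow> Sn P W n (\<lambda>p z. u p z * v p z)"
proof (induction n arbitrary: u v)
  case 0 then show ?case by (simp add: bdd_fam_mult)
next
  case (Suc n)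
  from Suc.prems obtain u' v' where
    u: "\<forall>p\<in>P. \<forall>z\<in>W. (u p has_vector_derivative u' p z) (at z within W)" "Sn P W n u'" and
    v: "\<forall>p\<in>P. \<forall>z\<in>W. (v p has_vector_derivative v' p z) (at z within W)" "Sn P W n v'"
    by auto
  have "\<forall>p\<in>P. \<forall>z\<in>W. ((\<lambda>z. u p z * v p z) has_vector_derivative (u p z * v' p z + u' p z * v p z)) (at z within W)"
    using u(1) v(1) by (auto intro!: derivative_intros)
  moreover have "Sn P W n (\<lambda>p z. u p z * v' p z + u' p z * v p z)"
    using Suc.IH u(2) v(2) Sn_mono[OF Suc.prems(1)] Sn_mono[OF Suc.prems(2)]
    by (intro Sn_add) blast+
  ultimately show ?case using Suc.prems
    by (auto intro!: bdd_fam_mult exI[of _ "\<lambda>p z. u p z * v' p z + u' p z * v p z"])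
qed

lemma Sn_zero: "Sn P W n (\<lambda>p z. 0)"
proof (induction n)
  case 0 then show ?case by (auto simp: bdd_fam_def)
next
  case (Suc n) then show ?case by (auto simp: bdd_fam_def intro!: exI[of _ "\<lambda>p z. 0"])
qed

lemma Sn_const: assumes "\<exists>B. \<forall>p\<in>P. norm (k p) \<le> B" shows "Sn P W n (\<lambda>p z. k p)"
proof (cases n)
  case 0 then show ?thesis using assms
    by (auto simp: bdd_fam_def) 
next
  case (Suc m) 
  then show ?thesis using assms Sn_zero[of P W m]
    by (auto simp: bdd_fam_def intro!: exI[of _ "\<lambda>p z. 0"])
qed

lemma Sn_cong: "Sn P W n u \<Longrightarrow> (\<And>p z. p \<in> P \<Longrightarrow> z \<in> W \<Longrightarrow> u p z = v p z) \<Longrightarrow> Sn P W n v"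
proof (cases n)
  case 0
  assume "Sn P W n u" "\<And>p z. p \<in> P \<Longrightarrow> z \<in> W \<Longrightarrow> u p z = v p z"
  then show ?thesis using 0 unfolding bdd_fam_def
    by (smt (verit, best) Sn.simps(1) bdd_fam_def continuous_on_cong)
next
  case (Suc m)
  assume a: "Sn P W n u" and e: "\<And>p z. p \<in> P \<Longrightarrow> z \<in> W \<Longrightarrow> u p z = v p z"
  have "bdd_fam P W v" using Sn_bdd[OF a] e unfolding bdd_fam_def
    by (smt (verit, best) continuous_on_cong)
  moreover from a Suc obtain u' where
    u: "\<forall>p\<in>P. \<forall>z\<in>W. (u p has_vector_derivative u' p z) (at z within W)" "Sn P W m u'" by auto
  have "\<forall>p\<in>P. \<forall>z\<in>W. (v p has_vector_derivative u' p z) (at z within W)"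
    using u(1) e by (metis has_vector_derivative_transform)
  ultimately show ?thesis using Suc u(2) by auto
qed

lemma bdd_fam_inverse:
  assumes c: "c > 0" "\<And>p z. p \<in> P \<Longrightarrow> z \<in> W \<Longrightarrow> norm (g p z) \<ge> c"
    and b: "bdd_fam P W g"
  shows "bdd_fam P W (\<lambda>p z. inverse (g p z))"
proof -
  have "\<forall>p\<in>P. \<forall>z\<in>W. norm (inverse (g p z)) \<le> 1 / c"
  proof (intro ballI)
    fix p z assume "p \<in> P" "z \<in> W"
    then have "norm (g p z) \<ge> c" using c by auto
    then show "norm (inverse (g p z)) \<le> 1 / c" using c(1)
      by (simp add: norm_inverse le_imp_inverse_le divide_inverse)
  qed
  moreover have "\<forall>p\<in>P. continuous_on W (\<lambda>z. inverse (g p z))"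
  proof
    fix p assume "p \<in> P"
    then show "continuous_on W (\<lambda>z. inverse (g p z))"
      using b c unfolding bdd_fam_def
      by (intro continuous_on_inverse) (auto, metis norm_zero not_le)
  qed
  ultimately show ?thesis unfolding bdd_fam_def by blast
qed

lemma Sn_inverse:
  assumes c: "c > 0" "\<And>p z. p \<in> P \<Longrightarrow> z \<in> W \<Longrightarrow> norm (g p z) \<ge> c"
  shows "Sn P W n g \<Longrightarrow> Sn P W n (\<lambda>p z. inverse (g p z))"
proof (induction n)
  case 0 then show ?case using bdd_fam_inverse[OF c] by simp
next
  case (Suc n)
  from Suc.prems obtain g' where
    g: "\<forall>p\<in>P. \<forall>z\<in>W. (g p has_vector_derivative g' p z) (at z within W)" "Sn P W n g'"
    by auto
  have nz: "g p z \<noteq> 0" if "p \<in> P" "z \<in> W" for p z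
    using c that by (metis norm_zero not_le)
  have "\<forall>p\<in>P. \<forall>z\<in>W. ((\<lambda>z. inverse (g p z)) has_vector_derivative
        (g' p z * ((-1) * (inverse (g p z) * inverse (g p z))))) (at z within W)"
  proof (intro ballI)
    fix p z assume pz: "p \<in> P" "z \<in> W"
    have "((inverse \<circ> g p) has_vector_derivative (g' p z * (- (inverse (g p z) ^ Suc (Suc 0)))))
      (at z within W)"
      by (rule field_vector_diff_chain_within[OF g(1)[rule_format, OF pz]])
         (rule DERIV_inverse[OF nz[OF pz]])
    then show "((\<lambda>z. inverse (g p z)) has_vector_derivative
        (g' p z * ((-1) * (inverse (g p z) * inverse (g p z))))) (at z within W)"
      by (simp add: o_def power2_eq_square)
  qed
  moreover have "Sn P W n (\<lambda>p z. g' p z * ((-1) * (inverse (g p z) * inverse (g p z))))"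
    using Suc.IH[OF Sn_mono[OF Suc.prems]] g(2)
    by (intro Sn_mult Sn_const) auto
  ultimately show ?case using Suc.prems bdd_fam_inverse[OF c] 
    by (auto intro!: exI[of _ "\<lambda>p z. g' p z * ((-1) * (inverse (g p z) * inverse (g p z)))"])
qed

lemma int_norm_bound:
  fixes f :: "real \<Rightarrow> complex"
  assumes "f integrable_on {a..b}" "a \<le> b" "\<And>z. z \<in> {a..b} \<Longrightarrow> norm (f z) \<le> B"
  shows "norm (integral {a..b} f) \<le> B * (b - a)"
proof -
  have "(f has_integral integral {a..b} f) (cbox a b)" using assms(1) by (simp add: has_integral_integral)
  moreover have "0 \<le> B" using assms(2) assms(3)[of a] by (meson atLeastAtMost_iff dual_order.trans norm_ge_zero order_refl)
  ultimately have "norm (integral {a..b} f) \<le> B * Henstock_Kurzweil_Integration.content (cbox a b)"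
    using has_integral_bound[of B f "integral {a..b} f" a b] assms(3) by auto
  then show ?thesis using assms(2) by simp
qed

lemma ibp_bound:
  fixes P :: "'p set" and a b c c' :: real and \<Psi> \<Psi>d :: "'p \<Rightarrow> real \<Rightarrow> complex"
  assumes ab: "a \<le> b"
   and dPsi: "\<And>p z. p \<in> P \<Longrightarrow> z \<in> {a..b} \<Longrightarrow> (\<Psi> p has_vector_derivative \<Psi>d p z) (at z within {a..b})"
   and SPsi: "\<And>n. Sn P {a..b} n \<Psi>d"
   and c: "c > 0" "\<And>p z. p \<in> P \<Longrightarrow> z \<in> {a..b} \<Longrightarrow> norm (\<Psi>d p z) \<ge> c"
   and re: "\<And>p z. p \<in> P \<Longrightarrow> z \<in> {a..b} \<Longrightarrow> Re (\<Psi> p z) \<le> 0"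
   and ea: "\<And>p. p \<in> P \<Longrightarrow> Re (\<Psi> p a) \<le> -c'" and eb: "\<And>p. p \<in> P \<Longrightarrow> Re (\<Psi> p b) \<le> -c'"
  shows "Sn P {a..b} N u \<Longrightarrow> \<exists>C. \<forall>p\<in>P. \<forall>h. 0 < h \<and> h \<le> 1 \<longrightarrow>
            norm (integral {a..b} (\<lambda>z. u p z * exp (\<Psi> p z / of_real h))) \<le> C * (h ^ N + exp (-c'/h))"
proof (induction N arbitrary: u)
  have Ed: "((\<lambda>z. exp (\<Psi> p z / of_real h)) has_vector_derivative
            (\<Psi>d p z / of_real h * exp (\<Psi> p z / of_real h))) (at z within {a..b})"
    if "p \<in> P" "z \<in> {a..b}" for p z h
  proof -
    have "((\<lambda>z. \<Psi> p z / of_real h) has_vector_derivative \<Psi>d p z / of_real h) (at z within {a..b})"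
      using dPsi[OF that] by (rule has_vector_derivative_divide)
    from field_vector_diff_chain_within[OF this, of exp]
    show ?thesis by (simp add: o_def DERIV_exp has_field_derivative_at_within)
  qed
  have Ecn: "continuous_on {a..b} (\<lambda>z. exp (\<Psi> p z / of_real h))" if "p \<in> P" for p h
    using Ed[OF that] by (rule continuous_on_vector_derivative)
  have En: "norm (exp (\<Psi> p z / of_real h)) \<le> 1" if "p \<in> P" "z \<in> {a..b}" "h > 0" for p z h
    using re[OF that(1,2)] that(3) by (simp add: Re_divide_of_real divide_nonpos_pos)
  have Ea: "norm (exp (\<Psi> p a / of_real h)) \<le> exp (-c'/h)" if "p \<in> P" "h > 0" for p h
    using ea[OF that(1)] that(2) by (simp add: Re_divide_of_real divide_right_mono[of _ "-c'" h, simplified])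
  have Eb: "norm (exp (\<Psi> p b / of_real h)) \<le> exp (-c'/h)" if "p \<in> P" "h > 0" for p h
    using eb[OF that(1)] that(2) by (simp add: Re_divide_of_real divide_right_mono[of _ "-c'" h, simplified])
  {
  case 0
  then obtain B where B: "\<forall>p\<in>P. \<forall>z\<in>{a..b}. norm (u p z) \<le> B" and uc: "\<forall>p\<in>P. continuous_on {a..b} (u p)"
    by (auto simp: bdd_fam_def)
  show ?case
  proof (intro exI[of _ "max B 0 * (b - a)"] ballI allI impI)
    fix p and h :: real assume p: "p \<in> P" and h: "0 < h \<and> h \<le> 1"
    have "norm (integral {a..b} (\<lambda>z. u p z * exp (\<Psi> p z / of_real h))) \<le> max B 0 * (b - a)"
    proof (rule int_norm_bound[OF _ ab])
      show "(\<lambda>z. u p z * exp (\<Psi> p z / of_real h)) integrable_on {a..b}"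
        using uc p Ecn[OF p] by (intro integrable_continuous_interval continuous_on_mult) auto
      fix z assume z: "z \<in> {a..b}"
      have "norm (u p z) \<le> max B 0" using B p z by force
      then show "norm (u p z * exp (\<Psi> p z / of_real h)) \<le> max B 0"
        using En[OF p z] h unfolding norm_mult
        by (metis mult.right_neutral mult_mono' max.cobounded2 norm_ge_zero)
    qed
    also have "\<dots> \<le> max B 0 * (b - a) * (h ^ 0 + exp (- c' / h))"
    proof -
      have "0 \<le> max B 0 * (b - a)" using ab by simp
      then show ?thesis by (simp add: mult_le_cancel_left1 not_less)
    qed
    finally show "norm (integral {a..b} (\<lambda>z. u p z * exp (\<Psi> p z / of_real h)))
       \<le> max B 0 * (b - a) * (h ^ 0 + exp (- c' / h))" .
  qed
  }
  {
  case (Suc N)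
  have Siv: "Sn P {a..b} (Suc N) (\<lambda>p z. inverse (\<Psi>d p z))"
    by (rule Sn_inverse[OF c SPsi])
  have Sv: "Sn P {a..b} (Suc N) (\<lambda>p z. u p z * inverse (\<Psi>d p z))"
    using Sn_mult[OF Suc.prems Siv] .
  have "\<exists>v'. (\<forall>p\<in>P. \<forall>z\<in>{a..b}. ((\<lambda>z. u p z * inverse (\<Psi>d p z)) has_vector_derivative v' p z) (at z within {a..b}))
     \<and> Sn P {a..b} N v'"
    using Sv by (simp only: Sn.simps(2))
  then obtain v' where v': "\<forall>p\<in>P. \<forall>z\<in>{a..b}. ((\<lambda>z. u p z * inverse (\<Psi>d p z)) has_vector_derivative v' p z) (at z within {a..b})"
     "Sn P {a..b} N v'"
    by blast
  obtain C1 where C1: "\<forall>p\<in>P. \<forall>h. 0 < h \<and> h \<le> 1 \<longrightarrow>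
            norm (integral {a..b} (\<lambda>z. v' p z * exp (\<Psi> p z / of_real h))) \<le> C1 * (h ^ N + exp (-c'/h))"
    using Suc.IH[OF v'(2)] by blast
  obtain Bv where Bv: "\<forall>p\<in>P. \<forall>z\<in>{a..b}. norm (u p z * inverse (\<Psi>d p z)) \<le> Bv"
    using Sn_bdd[OF Sv] by (auto simp: bdd_fam_def)
  have v'c: "\<forall>p\<in>P. continuous_on {a..b} (v' p)" using Sn_bdd[OF v'(2)] by (auto simp: bdd_fam_def)
  have ab': "a \<in> {a..b}" "b \<in> {a..b}" using ab by auto
  show ?case
  proof (intro exI[of _ "2 * max Bv 0 + max C1 0"] ballI allI impI)
    fix p and h :: real assume p: "p \<in> P" and h: "0 < h \<and> h \<le> 1"
    define E where "E = (\<lambda>z. exp (\<Psi> p z / of_real h))"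
    define v where "v = (\<lambda>z. u p z * inverse (\<Psi>d p z))"
    have nz: "\<Psi>d p z \<noteq> 0" if "z \<in> {a..b}" for z
      using c p that by (metis norm_zero not_le)
    have D: "((\<lambda>z. v z * E z) has_vector_derivative (u p z * E z / of_real h + v' p z * E z)) (at z within {a..b})"
      if z: "z \<in> {a..b}" for z
    proof -
      have "((\<lambda>z. v z * E z) has_vector_derivative (v z * (\<Psi>d p z / of_real h * E z) + v' p z * E z)) (at z within {a..b})"
        unfolding v_def E_def using v'(1) p z Ed[OF p z]
        by (intro has_vector_derivative_mult) auto
      moreover have eq: "v z * (\<Psi>d p z / of_real h * E z) = u p z * E z / of_real h"
        unfolding v_def using nz[OF z] by (simp add: field_simps)
      ultimately show ?thesis by (simp only: eq)
    qed
    have I1: "((\<lambda>z. u p z * E z / of_real h + v' p z * E z) has_integral (v b * E b - v a * E a)) {a..b}"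
      using fundamental_theorem_of_calculus[OF ab D] by simp
    have I2: "((\<lambda>z. v' p z * E z) has_integral integral {a..b} (\<lambda>z. v' p z * E z)) {a..b}"
      using v'c p Ecn[OF p] unfolding E_def
      by (intro integrable_integral integrable_continuous_interval continuous_on_mult) auto
    have I3: "((\<lambda>z. u p z * E z / of_real h) has_integral (v b * E b - v a * E a - integral {a..b} (\<lambda>z. v' p z * E z))) {a..b}"
      using has_integral_diff[OF I1 I2] by simp
    have I4: "((\<lambda>z. u p z * E z) has_integral (of_real h * (v b * E b - v a * E a - integral {a..b} (\<lambda>z. v' p z * E z)))) {a..b}"
      using has_integral_mult_right[OF I3, of "of_real h"] h by simp
    define J where "J = integral {a..b} (\<lambda>z. v' p z * E z)"
    have "norm (integral {a..b} (\<lambda>z. u p z * E z)) = h * norm (v b * E b - v a * E a - J)"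
      using integral_unique[OF I4] h unfolding J_def by (simp add: norm_mult)
    also have "\<dots> \<le> h * (norm (v b) * norm (E b) + norm (v a) * norm (E a) + norm J)"
    proof -
      have "norm (v b * E b - v a * E a - J) \<le> norm (v b * E b) + norm (v a * E a) + norm J"
        by (metis (no_types, opaque_lifting) add_mono norm_triangle_ineq4 order_trans order_refl) 
      then show ?thesis using h by (simp add: norm_mult)
    qed
    also have "\<dots> \<le> h * (max Bv 0 * exp (-c'/h) + max Bv 0 * exp (-c'/h) + max C1 0 * (h ^ N + exp (-c'/h)))"
    proof -
      have 1: "norm (v b) \<le> max Bv 0" "norm (v a) \<le> max Bv 0" using Bv p ab' unfolding v_def by force+
      have 2: "norm (E b) \<le> exp (-c'/h)" "norm (E a) \<le> exp (-c'/h)"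
        unfolding E_def using Ea[OF p] Eb[OF p] h by auto
      have 3: "norm J \<le> C1 * (h ^ N + exp (-c'/h))"
        unfolding E_def J_def using C1 p h by blast
      have "C1 * (h ^ N + exp (-c'/h)) \<le> max C1 0 * (h ^ N + exp (-c'/h))"
        using h by (intro mult_right_mono) auto
      with 3 have 3: "norm J \<le> max C1 0 * (h ^ N + exp (-c'/h))" by linarith
      have "norm (v b) * norm (E b) \<le> max Bv 0 * exp (-c'/h)"
        using 1 2 by (intro mult_mono) auto
      moreover have "norm (v a) * norm (E a) \<le> max Bv 0 * exp (-c'/h)"
        using 1 2 by (intro mult_mono) auto
      ultimately show ?thesis using h 3 by (intro mult_left_mono) auto
    qed
    also have "\<dots> \<le> (2 * max Bv 0 + max C1 0) * (h ^ Suc N + exp (- c' / h))"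
    proof -
      define e where "e = exp (-c'/h)"
      define B where "B = max Bv 0"
      define C where "C = max C1 0"
      have e: "0 \<le> e" unfolding e_def by simp
      have B: "0 \<le> B" "0 \<le> C" unfolding B_def C_def by auto
      have he: "h * e \<le> e" using h e by (simp add: mult_left_le_one_le)
      have a1: "h * (2 * B * e) \<le> 2 * B * e"
        using mult_left_mono[OF he, of "2*B"] B by (simp add: algebra_simps)
      have a2: "h * (C * e) \<le> C * e"
        using mult_left_mono[OF he, of "C"] B by (simp add: algebra_simps)
      have a3: "0 \<le> 2 * B * h ^ Suc N" using h B by simp
      have "h * (B * e + B * e + C * (h ^ N + e)) = h * (2 * B * e) + C * h ^ Suc N + h * (C * e)"
        by (simp add: algebra_simps)
      also have "\<dots> \<le> 2 * B * e + C * h ^ Suc N + C * e" using a1 a2 by linarith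
      also have "\<dots> \<le> (2 * B + C) * (h ^ Suc N + e)" using a3 by (simp add: algebra_simps)
      finally show ?thesis unfolding e_def B_def C_def .
    qed
    finally show "norm (integral {a..b} (\<lambda>z. u p z * exp (\<Psi> p z / of_real h)))
          \<le> (2 * max Bv 0 + max C1 0) * (h ^ Suc N + exp (- c' / h))" unfolding E_def .
  qed
  }
qed

definition geomZ :: "real \<Rightarrow> int \<Rightarrow> int \<Rightarrow> real" where
  "geomZ r n k = (if k > n then r ^ nat (k - n - 1) else r ^ nat (n - k))"

lemma geomZ_has_sum:
  assumes r: "0 \<le> r" "r < 1"
  shows "(geomZ r n has_sum (2 / (1 - r))) UNIV"
proof -
  have g: "((\<lambda>j::nat. r ^ j) has_sum (1 / (1 - r))) UNIV"
    using r by (intro sums_nonneg_imp_has_sum geometric_sums) auto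
  have A: "(geomZ r n has_sum (1 / (1 - r))) {k. k > n}"
  proof -
    have "((\<lambda>j::nat. r ^ j) has_sum (1 / (1 - r))) UNIV = (geomZ r n has_sum (1 / (1 - r))) {k. k > n}"
      apply (rule has_sum_reindex_bij_witness[where i = "\<lambda>k. nat (k - n - 1)" and j = "\<lambda>j. n + 1 + int j"])
         apply (simp_all add: geomZ_def)
      done
    with g show ?thesis by simp
  qed
  have B: "(geomZ r n has_sum (1 / (1 - r))) {k. k \<le> n}"
  proof -
    have "((\<lambda>j::nat. r ^ j) has_sum (1 / (1 - r))) UNIV = (geomZ r n has_sum (1 / (1 - r))) {k. k \<le> n}"
      apply (rule has_sum_reindex_bij_witness[where i = "\<lambda>k. nat (n - k)" and j = "\<lambda>j. n - int j"])
         apply (simp_all add: geomZ_def)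
      done
    with g show ?thesis by simp
  qed
  have "(geomZ r n has_sum (1 / (1 - r) + 1 / (1 - r))) ({k. k > n} \<union> {k. k \<le> n})"
    by (rule has_sum_Un_disjoint[OF A B]) auto
  moreover have "{k. k > n} \<union> {k. k \<le> n} = (UNIV :: int set)" by auto
  ultimately show ?thesis by simp
qed

definition K0 :: real where "K0 = 2 / (1 - exp (-1/8))"

lemma K0_pos: "K0 > 0"
  unfolding K0_def by (simp add: field_simps)

lemma gauss8_le_geomZ:
  fixes t :: real and k :: int
  shows "exp (-((t - k)\<^sup>2) / 8) \<le> geomZ (exp (-1/8)) (floor t) k"
proof -
  define n where "n = floor t"
  have tn: "n \<le> t" "t < n + 1" unfolding n_def by linarith+
  have key: "exp (-((t - k)\<^sup>2) / 8) \<le> exp (-1/8) ^ j" if "real j \<le> \<bar>t - k\<bar>" for j :: nat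
  proof -
    have "real j \<le> (t - k)\<^sup>2"
    proof (cases j)
      case 0 then show ?thesis by simp
    next
      case (Suc i)
      then have "real j \<le> real j * real j" by simp
      also have "\<dots> \<le> \<bar>t - k\<bar> * \<bar>t - k\<bar>" using that by (intro mult_mono) auto
      also have "\<dots> = (t - k)\<^sup>2" by (simp add: power2_eq_square abs_mult_self_eq)
      finally show ?thesis .
    qed
    then have "exp (-((t - k)\<^sup>2) / 8) \<le> exp (real j * (-1/8))" by simp
    also have "\<dots> = exp (-1/8) ^ j" by (rule exp_of_nat_mult)
    finally show ?thesis .
  qed
  show ?thesis
  proof (cases "k > n")
    case True
    have "real (nat (k - n - 1)) \<le> \<bar>t - k\<bar>" using True tn by simp
    then show ?thesis using key[of "nat (k - n - 1)"] True unfolding geomZ_def n_def by simp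
  next
    case False
    have "real (nat (n - k)) \<le> \<bar>t - k\<bar>" using False tn by simp
    then show ?thesis using key[of "nat (n - k)"] False unfolding geomZ_def n_def by simp
  qed
qed

lemma fixes t :: real
  shows gauss8_summable: "(\<lambda>k::int. exp (-((t - k)\<^sup>2) / 8)) summable_on UNIV"
      and gauss8_infsum: "infsum (\<lambda>k::int. exp (-((t - k)\<^sup>2) / 8)) UNIV \<le> K0"
proof -
  have G: "(geomZ (exp (-1/8)) (floor t) has_sum K0) UNIV"
    unfolding K0_def by (rule geomZ_has_sum) auto
  then have "(\<lambda>k. norm (geomZ (exp (-1/8)) (floor t) k)) summable_on UNIV"
    by (metis has_sum_imp_summable summable_on_iff_abs_summable_on_real)
  then have "(\<lambda>k::int. norm (exp (-((t - k)\<^sup>2) / 8))) summable_on UNIV"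
    by (rule Infinite_Sum.abs_summable_on_comparison_test[where f="\<lambda>k::int. exp (-((t - k)\<^sup>2) / 8)"])
      (simp only: real_norm_def abs_exp_cancel, rule order_trans[OF gauss8_le_geomZ abs_ge_self])
  then show S: "(\<lambda>k::int. exp (-((t - k)\<^sup>2) / 8)) summable_on UNIV"
    by (rule abs_summable_summable)
  show "infsum (\<lambda>k::int. exp (-((t - k)\<^sup>2) / 8)) UNIV \<le> K0"
    using infsum_mono[OF S has_sum_imp_summable[OF G] gauss8_le_geomZ] infsumI[OF G] by simp
qed

lemma gauss_tail:
  fixes t d h :: real and T :: "int set"
  assumes h: "0 < h" "h \<le> 1" and d: "\<And>k. k \<in> T \<Longrightarrow> d \<le> \<bar>t - k\<bar>" "0 \<le> d"
  shows "(\<lambda>k::int. exp (-((t - k)\<^sup>2) / (4*h))) summable_on T"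
    and "infsum (\<lambda>k::int. exp (-((t - k)\<^sup>2) / (4*h))) T \<le> K0 * exp (-(d\<^sup>2) / (8*h))"
proof -
  define e where "e = exp (-(d\<^sup>2) / (8*h))"
  have le: "exp (-((t - k)\<^sup>2) / (4*h)) \<le> e * exp (-((t - k)\<^sup>2) / 8)" if "k \<in> T" for k
  proof -
    have "d\<^sup>2 \<le> \<bar>t - k\<bar>\<^sup>2" using d that by (intro power_mono) auto
    then have "d\<^sup>2 \<le> (t - k)\<^sup>2" by simp
    have "(t-k)\<^sup>2 / (4*h) = (t-k)\<^sup>2 / (8*h) + (t-k)\<^sup>2 / (8*h)" using h by (simp add: field_simps)
    moreover have "d\<^sup>2 / (8*h) \<le> (t-k)\<^sup>2 / (8*h)" using \<open>d\<^sup>2 \<le> (t - k)\<^sup>2\<close> h by (simp add: divide_right_mono)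
    moreover have "(t-k)\<^sup>2 / 8 \<le> (t-k)\<^sup>2 / (8*h)" using h
      by (intro divide_left_mono) auto
    ultimately have "-((t - k)\<^sup>2) / (4*h) \<le> -(d\<^sup>2) / (8*h) + -((t - k)\<^sup>2) / 8" by simp
    then show ?thesis unfolding e_def by (simp add: exp_add[symmetric])
  qed
  have S8: "(\<lambda>k::int. exp (-((t - k)\<^sup>2) / 8)) summable_on T"
    using gauss8_summable by (rule summable_on_subset_banach) auto
  have "(\<lambda>k::int. norm (e * exp (-((t - k)\<^sup>2) / 8))) summable_on T"
  proof -
    have "(\<lambda>k::int. e * exp (-((t - k)\<^sup>2) / 8)) summable_on T" using S8 by (rule summable_on_cmult_right)
    then show ?thesis by (rule summable_on_iff_abs_summable_on_real[THEN iffD1])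
  qed
  then have "(\<lambda>k::int. norm (exp (-((t - k)\<^sup>2) / (4*h)))) summable_on T"
    by (rule Infinite_Sum.abs_summable_on_comparison_test[where f="\<lambda>k::int. exp (-((t - k)\<^sup>2) / (4*h))"])
       (simp only: real_norm_def abs_exp_cancel, rule order_trans[OF le abs_ge_self], assumption)
  then show S: "(\<lambda>k::int. exp (-((t - k)\<^sup>2) / (4*h))) summable_on T"
    by (rule abs_summable_summable)
  have "infsum (\<lambda>k::int. exp (-((t - k)\<^sup>2) / (4*h))) T \<le> infsum (\<lambda>k::int. e * exp (-((t - k)\<^sup>2) / 8)) T"
    by (rule infsum_mono[OF S summable_on_cmult_right[OF S8] le])
  also have "\<dots> = e * infsum (\<lambda>k::int. exp (-((t - k)\<^sup>2) / 8)) T"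
    by (rule infsum_cmult_right') 
  also have "\<dots> \<le> e * K0"
  proof -
    have "infsum (\<lambda>k::int. exp (-((t - k)\<^sup>2) / 8)) T \<le> infsum (\<lambda>k::int. exp (-((t - k)\<^sup>2) / 8)) UNIV"
      by (rule infsum_mono_neutral[OF S8 gauss8_summable]) auto
    then have "infsum (\<lambda>k::int. exp (-((t - k)\<^sup>2) / 8)) T \<le> K0" using gauss8_infsum[of t] by linarith
    moreover have "0 \<le> e" unfolding e_def by simp
    ultimately show ?thesis by (rule mult_left_mono)
  qed
  finally show "infsum (\<lambda>k::int. exp (-((t - k)\<^sup>2) / (4*h))) T \<le> K0 * exp (-(d\<^sup>2) / (8*h))"
    unfolding e_def by (simp add: mult.commute)
qed

definition gk :: "real \<Rightarrow> real \<Rightarrow> real \<Rightarrow> int \<Rightarrow> real \<Rightarrow> complex" where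
  "gk h x \<xi> k z = exp (\<i> * complex_of_real (\<xi> * (z - of_int k) / h))
                    * complex_of_real (exp (- ((z - of_int k - x)\<^sup>2) / (4 * h)))"

lemma wavepacket_gk: "wavepacket h x \<xi> z = infsum (\<lambda>k. gk h x \<xi> k z) UNIV"
  unfolding wavepacket_def gk_def by simp

lemma norm_gk: "norm (gk h x \<xi> k z) = exp (- (((z - x) - of_int k)\<^sup>2) / (4 * h))"
proof -
  have "norm (exp (\<i> * complex_of_real (\<xi> * (z - of_int k) / h))) = 1" by simp
  moreover have "(z - of_int k - x)\<^sup>2 = ((z - x) - of_int k)\<^sup>2" by (simp add: algebra_simps)
  ultimately show ?thesis unfolding gk_def norm_mult by simp
qed

lemma wp_decomp:
  assumes h: "0 < h" "h \<le> 1" and M: "finite M" and d: "0 \<le> d"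
    and far: "\<And>k. k \<notin> M \<Longrightarrow> d \<le> \<bar>(z - x) - of_int k\<bar>"
  shows "norm (wavepacket h x \<xi> z - (\<Sum>k\<in>M. gk h x \<xi> k z)) \<le> K0 * exp (-(d\<^sup>2) / (8*h))"
proof -
  have T1: "(\<lambda>k::int. exp (-(((z - x) - k)\<^sup>2) / (4*h))) summable_on (UNIV - M)"
   and T2: "infsum (\<lambda>k::int. exp (-(((z - x) - k)\<^sup>2) / (4*h))) (UNIV - M) \<le> K0 * exp (-(d\<^sup>2) / (8*h))"
    using gauss_tail[OF h, of "UNIV - M" d "z - x"] far d by auto
  have A: "(\<lambda>k. norm (gk h x \<xi> k z)) summable_on (UNIV - M)"
    using T1 unfolding norm_gk by simp
  then have S: "(\<lambda>k. gk h x \<xi> k z) summable_on (UNIV - M)"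
    by (rule abs_summable_summable)
  have "infsum (\<lambda>k. gk h x \<xi> k z) (M \<union> (UNIV - M)) = infsum (\<lambda>k. gk h x \<xi> k z) M + infsum (\<lambda>k. gk h x \<xi> k z) (UNIV - M)"
    by (rule infsum_Un_disjoint[OF summable_on_finite[OF M] S]) auto
  then have "wavepacket h x \<xi> z - (\<Sum>k\<in>M. gk h x \<xi> k z) = infsum (\<lambda>k. gk h x \<xi> k z) (UNIV - M)"
    using M unfolding wavepacket_gk by simp
  also have "norm \<dots> \<le> infsum (\<lambda>k. norm (gk h x \<xi> k z)) (UNIV - M)"
    by (rule norm_infsum_bound[OF A])
  also have "\<dots> \<le> K0 * exp (-(d\<^sup>2) / (8*h))" using T2 unfolding norm_gk by simp
  finally show ?thesis .
qed

lemma wp_bound: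
  assumes h: "0 < h" "h \<le> 1"
  shows "norm (wavepacket h x \<xi> z) \<le> K0"
  using wp_decomp[OF h, of "{}" 0 z x \<xi>] by simp

lemma wp_periodic: "wavepacket h x \<xi> (z + of_int n) = wavepacket h x \<xi> z"
proof -
  have "infsum (\<lambda>k. gk h x \<xi> k (z + of_int n)) UNIV = infsum (\<lambda>k. gk h x \<xi> k z) UNIV"
    by (rule infsum_reindex_bij_witness[where j = "\<lambda>k. k - n" and i = "\<lambda>k. k + n"])
       (auto simp: gk_def algebra_simps)
  then show ?thesis unfolding wavepacket_gk .
qed

lemma wp_frac: "wavepacket h x \<xi> (frac s) = wavepacket h x \<xi> s"
proof -
  have "frac s = s + of_int (- floor s)" unfolding frac_def by simp
  then show ?thesis using wp_periodic by metis
qed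

lemma window_shift:
  fixes F :: "real \<Rightarrow> complex"
  assumes per: "\<And>z. F (z + 1) = F z" and I: "(F has_integral I) {0..1}" and a: "-1 \<le> a" "a \<le> 1"
  shows "(F has_integral I) {a..a+1}"
proof (cases "0 \<le> a")
  case True
  have i1: "F integrable_on {0..a}" "F integrable_on {a..1}"
    using I True a by (auto intro: integrable_subinterval_real[OF has_integral_integrable[OF I]])
  have sum: "integral {0..a} F + integral {a..1} F = I"
    using Henstock_Kurzweil_Integration.integral_combine[where a=0 and c=a and b=1 and f=F] True a has_integral_integrable[OF I] integral_unique[OF I] by auto
  have "((\<lambda>x. F (x + (-1))) has_integral integral {0..a} F) {0 - (-1)..a - (-1)}"
    by (rule has_integral_shift_real_ivl) (use i1 in auto)
  moreover have "F (x + (-1)) = F x" for x using per[of "x - 1"] by simp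
  ultimately have s: "(F has_integral integral {0..a} F) {1..a+1}" by simp
  have "(F has_integral (integral {a..1} F + integral {0..a} F)) {a..a+1}"
    by (rule has_integral_combine[of a 1 "a+1"]) (use a s i1 True in auto)
  then show ?thesis using sum by (simp add: add.commute)
next
  case False
  have i1: "F integrable_on {0..a+1}" "F integrable_on {a+1..1}"
    using I False a by (auto intro: integrable_subinterval_real[OF has_integral_integrable[OF I]])
  have sum: "integral {0..a+1} F + integral {a+1..1} F = I"
    using Henstock_Kurzweil_Integration.integral_combine[where a=0 and c="a+1" and b=1 and f=F] False a has_integral_integrable[OF I] integral_unique[OF I] by auto
  have "((\<lambda>x. F (x + 1)) has_integral integral {a+1..1} F) {a+1 - 1..1 - 1}"
    by (rule has_integral_shift_real_ivl) (use i1 in auto)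
  then have s: "(F has_integral integral {a+1..1} F) {a..0}" using per by simp
  have "(F has_integral (integral {a+1..1} F + integral {0..a+1} F)) {a..a+1}"
    by (rule has_integral_combine[of a 0 "a+1"]) (use a s i1 False in auto)
  then show ?thesis using sum by (simp add: add.commute)
qed

definition integrand :: "(real \<Rightarrow> real) \<Rightarrow> real \<Rightarrow> real \<Rightarrow> real \<Rightarrow> real \<Rightarrow> real \<Rightarrow> real \<Rightarrow> complex" where
  "integrand \<tau> x \<xi> h y \<eta> z = cnj (wavepacket h y \<eta> z) *
      (wavepacket h x \<xi> (2 * z) * exp (\<i> * complex_of_real ((1 / h) * \<tau> z)))"

lemma l2_inner_integrand:
  "l2_inner (wavepacket h y \<eta>) (Fhat \<tau> (1 / h) (wavepacket h x \<xi>)) = integral {0..1} (integrand \<tau> x \<xi> h y \<eta>)"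
  unfolding l2_inner_def Fhat_def integrand_def doubling_def wp_frac ..

lemma integrand_periodic:
  assumes "\<forall>z. \<tau> (z + 1) = \<tau> z"
  shows "integrand \<tau> x \<xi> h y \<eta> (z + 1) = integrand \<tau> x \<xi> h y \<eta> z"
proof -
  have "wavepacket h y \<eta> (z + 1) = wavepacket h y \<eta> z" using wp_periodic[of h y \<eta> z 1] by simp
  moreover have "wavepacket h x \<xi> (2 * (z + 1)) = wavepacket h x \<xi> (2 * z)"
    using wp_periodic[of h x \<xi> "2*z" 2] by (simp add: algebra_simps)
  ultimately show ?thesis unfolding integrand_def using assms by simp
qed

definition Psi :: "(real \<Rightarrow> real) \<Rightarrow> real \<Rightarrow> real \<Rightarrow> int \<Rightarrow> real \<Rightarrow> real \<Rightarrow> real \<Rightarrow> complex" where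
  "Psi \<tau> x \<xi> m y \<eta> z = complex_of_real (- ((z - y)\<^sup>2 + (2 * z - of_int m - x)\<^sup>2) / 4)
      + \<i> * complex_of_real (\<xi> * (2 * z - of_int m) + \<tau> z - \<eta> * z)"

lemma main_term:
  assumes h: "h > 0"
  shows "cnj (gk h y \<eta> 0 z) * (gk h x \<xi> m (2 * z) * exp (\<i> * complex_of_real ((1 / h) * \<tau> z)))
         = exp (Psi \<tau> x \<xi> m y \<eta> z / complex_of_real h)"
proof -
  have "cnj (gk h y \<eta> 0 z) = exp (- \<i> * complex_of_real (\<eta> * z / h)) * complex_of_real (exp (- ((z - y)\<^sup>2) / (4 * h)))"
    unfolding gk_def by (simp add: exp_cnj)
  also have "\<dots> = exp (- \<i> * complex_of_real (\<eta> * z / h) + complex_of_real (- ((z - y)\<^sup>2) / (4 * h)))"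
    by (simp only: exp_add exp_of_real)
  finally have 1: "cnj (gk h y \<eta> 0 z) = exp (- \<i> * complex_of_real (\<eta> * z / h) + complex_of_real (- ((z - y)\<^sup>2) / (4 * h)))" .
  have 2: "gk h x \<xi> m (2 * z) = exp (\<i> * complex_of_real (\<xi> * (2 * z - of_int m) / h) + complex_of_real (- ((2 * z - of_int m - x)\<^sup>2) / (4 * h)))"
    unfolding gk_def by (simp only: exp_add exp_of_real)
  have "cnj (gk h y \<eta> 0 z) * (gk h x \<xi> m (2 * z) * exp (\<i> * complex_of_real ((1 / h) * \<tau> z)))
     = exp ((- \<i> * complex_of_real (\<eta> * z / h) + complex_of_real (- ((z - y)\<^sup>2) / (4 * h)))
        + ((\<i> * complex_of_real (\<xi> * (2 * z - of_int m) / h) + complex_of_real (- ((2 * z - of_int m - x)\<^sup>2) / (4 * h)))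
        + \<i> * complex_of_real ((1 / h) * \<tau> z)))"
    unfolding 1 2 by (simp add: exp_add)
  also have "(- \<i> * complex_of_real (\<eta> * z / h) + complex_of_real (- ((z - y)\<^sup>2) / (4 * h)))
        + ((\<i> * complex_of_real (\<xi> * (2 * z - of_int m) / h) + complex_of_real (- ((2 * z - of_int m - x)\<^sup>2) / (4 * h)))
        + \<i> * complex_of_real ((1 / h) * \<tau> z)) = Psi \<tau> x \<xi> m y \<eta> z / complex_of_real h"
    unfolding Psi_def using h by (simp add: complex_eq_iff field_simps)
  finally show ?thesis .
qed

lemma pow_le_exp: assumes "0 \<le> (x::real)" shows "x ^ n / fact n \<le> exp x"
proof -
  have s: "summable (\<lambda>n. x^n /\<^sub>R fact n)" by (rule summable_exp_generic)
  have "sum (\<lambda>n. x^n /\<^sub>R fact n) {n} \<le> suminf (\<lambda>n. x^n /\<^sub>R fact n)"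
    by (rule sum_le_suminf[OF s]) (use assms in auto)
  then show ?thesis by (simp add: exp_def divide_inverse_commute)
qed

lemma expsmall:
  fixes c :: real
  assumes c: "c > 0"
  shows "\<exists>C. \<forall>h>0. exp (-c/h) \<le> C * h ^ N"
proof (intro exI[of _ "fact N / c ^ N"] allI impI)
  fix h :: real assume h: "h > 0"
  have "(c/h) ^ N / fact N \<le> exp (c/h)" using c h by (intro pow_le_exp) auto
  then have "c ^ N / (h ^ N * fact N) \<le> exp (c/h)" by (simp add: power_divide)
  then have "c ^ N \<le> exp (c/h) * (h ^ N * fact N)" using h by (simp add: divide_le_eq)
  then have "exp (-c/h) * c ^ N \<le> exp (-c/h) * (exp (c/h) * (h ^ N * fact N))"
    by (intro mult_left_mono) auto
  also have "\<dots> = h ^ N * fact N" by (simp add: exp_minus field_simps)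
  finally have "exp (-c/h) * c ^ N \<le> h ^ N * fact N" .
  then show "exp (-c/h) \<le> fact N / c ^ N * h ^ N" using c by (simp add: field_simps)
qed

lemma tau_deriv:
  assumes "smooth_fun \<tau>"
  shows "((deriv ^^ n) \<tau> has_real_derivative (deriv ^^ Suc n) \<tau> z) (at z)"
proof -
  have "(deriv ^^ n) \<tau> differentiable (at z)" using assms unfolding smooth_fun_def by blast
  then have "DERIV ((deriv ^^ n) \<tau>) z :> deriv ((deriv ^^ n) \<tau>) z"
    by (simp add: DERIV_deriv_iff_real_differentiable)
  then show ?thesis by simp
qed

lemma cont_bound:
  fixes f :: "real \<Rightarrow> complex"
  assumes "continuous_on {a..b} f"
  shows "\<exists>B. \<forall>z\<in>{a..b}. norm (f z) \<le> B"
proof -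
  have "bounded (f ` {a..b})" by (rule compact_imp_bounded[OF compact_continuous_image[OF assms compact_Icc]])
  then show ?thesis unfolding bounded_pos by auto
qed

lemma Sn_tau:
  assumes "smooth_fun \<tau>"
  shows "Sn P {a..b} n (\<lambda>p z. complex_of_real ((deriv ^^ k) \<tau> z))"
proof -
  have bd: "bdd_fam P {a..b} (\<lambda>p z. complex_of_real ((deriv ^^ k) \<tau> z))" for k
  proof -
    have "continuous_on {a..b} ((deriv ^^ k) \<tau>)"
      by (rule continuous_at_imp_continuous_on) (use DERIV_isCont[OF tau_deriv[OF assms]] in blast)
    then have c: "continuous_on {a..b} (\<lambda>z. complex_of_real ((deriv ^^ k) \<tau> z))"
      using continuous_on_of_real_o_iff[of "{a..b}" "(deriv ^^ k) \<tau>"] by (simp add: o_def)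
    then show ?thesis using cont_bound[OF c] unfolding bdd_fam_def by blast
  qed
  have dv: "\<forall>p\<in>P. \<forall>z\<in>{a..b}. ((\<lambda>z. complex_of_real ((deriv ^^ k) \<tau> z)) has_vector_derivative
          complex_of_real ((deriv ^^ Suc k) \<tau> z)) (at z within {a..b})" for k
    using tau_deriv[OF assms] has_field_derivative_at_within has_vector_derivative_of_real by blast
  show ?thesis
  proof (induction n arbitrary: k)
    case 0 then show ?case using bd by simp
  next
    case (Suc n)
    show ?case unfolding Sn.simps(2)
      by (intro conjI bd exI[of _ "\<lambda>p z. complex_of_real ((deriv ^^ Suc k) \<tau> z)"] dv Suc.IH)
  qed
qed

lemma Sn_id: "Sn P {a..b} n (\<lambda>p z. complex_of_real z)"
proof -
  have bd: "bdd_fam P {a..b} (\<lambda>p z. complex_of_real z)"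
    unfolding bdd_fam_def using cont_bound[of a b "\<lambda>z. complex_of_real z"] by auto
  show ?thesis
  proof (cases n)
    case 0 then show ?thesis using bd by simp
  next
    case (Suc m)
    have "\<forall>p\<in>P. \<forall>z\<in>{a..b}. ((\<lambda>z. complex_of_real z) has_vector_derivative 1) (at z within {a..b})"
      by (auto intro!: derivative_eq_intros)
    moreover have "Sn P {a..b} m (\<lambda>p z. 1)" by (rule Sn_const) auto
    ultimately show ?thesis using bd Suc by (auto intro!: exI[of _ "\<lambda>p z. 1"])
  qed
qed

definition Psid :: "(real \<Rightarrow> real) \<Rightarrow> real \<Rightarrow> real \<Rightarrow> int \<Rightarrow> real \<Rightarrow> real \<Rightarrow> real \<Rightarrow> complex" where
  "Psid \<tau> x \<xi> m y \<eta> z = complex_of_real (- (5 * z - y - 2 * of_int m - 2 * x) / 2)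
      + \<i> * complex_of_real (2 * \<xi> + deriv \<tau> z - \<eta>)"

lemma Psi_deriv:
  assumes "smooth_fun \<tau>"
  shows "(Psi \<tau> x \<xi> m y \<eta> has_vector_derivative Psid \<tau> x \<xi> m y \<eta> z) (at z within S)"
proof -
  have t: "(\<tau> has_real_derivative deriv \<tau> z) (at z)" using tau_deriv[OF assms, of 0 z] by simp
  have r: "((\<lambda>z. - ((z - y)\<^sup>2 + (2 * z - of_int m - x)\<^sup>2) / 4) has_real_derivative
           (- (5 * z - y - 2 * of_int m - 2 * x) / 2)) (at z within S)"
    by (auto intro!: derivative_eq_intros simp: field_simps)
  have q: "((\<lambda>z. \<xi> * (2 * z - of_int m) + \<tau> z - \<eta> * z) has_real_derivative
           (2 * \<xi> + deriv \<tau> z - \<eta>)) (at z within S)"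
    by (auto intro!: derivative_eq_intros has_field_derivative_at_within[OF t])
  have "((\<lambda>z. complex_of_real (- ((z - y)\<^sup>2 + (2 * z - of_int m - x)\<^sup>2) / 4)
      + \<i> * complex_of_real (\<xi> * (2 * z - of_int m) + \<tau> z - \<eta> * z)) has_vector_derivative
       (complex_of_real (- (5 * z - y - 2 * of_int m - 2 * x) / 2) + \<i> * complex_of_real (2 * \<xi> + deriv \<tau> z - \<eta>)))
      (at z within S)"
    by (intro has_vector_derivative_add has_vector_derivative_mult_right has_vector_derivative_of_real r q)
  then show ?thesis unfolding Psi_def Psid_def .
qed

lemma Psi_cont: "smooth_fun \<tau> \<Longrightarrow> continuous_on S (Psi \<tau> x \<xi> m y \<eta>)"
  by (rule continuous_on_vector_derivative, rule Psi_deriv)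

lemma expPsi_integrable:
  assumes "smooth_fun \<tau>" "h \<noteq> 0"
  shows "(\<lambda>z. exp (Psi \<tau> x \<xi> m y \<eta> z / complex_of_real h)) integrable_on {a..b}"
  by (intro integrable_continuous_interval continuous_on_exp continuous_on_divide continuous_on_const Psi_cont[OF assms(1)]) (use assms(2) in auto)

lemma Re_Psi: "Re (Psi \<tau> x \<xi> m y \<eta> z) = - ((z - y)\<^sup>2 + (2 * z - of_int m - x)\<^sup>2) / 4"
  unfolding Psi_def by simp

lemma norm_expPsi: "h > 0 \<Longrightarrow> norm (exp (Psi \<tau> x \<xi> m y \<eta> z / complex_of_real h)) = exp (Re (Psi \<tau> x \<xi> m y \<eta> z) / h)"
  by (simp add: Re_divide_of_real)

lemma sq_ineq: "(s::real)\<^sup>2 + (2 * s + q)\<^sup>2 \<ge> q\<^sup>2 / 5"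
proof -
  have "s\<^sup>2 + (2 * s + q)\<^sup>2 - q\<^sup>2 / 5 = 5 * (s + 2 * q / 5)\<^sup>2" by (simp add: power2_eq_square field_simps)
  moreover have "5 * (s + 2 * q / 5)\<^sup>2 \<ge> 0" by simp
  ultimately show ?thesis by linarith
qed

lemma aux_lin: "(d::real) < A / 4 \<Longrightarrow> A \<le> B + C \<Longrightarrow> C = 2 * d \<Longrightarrow> B \<ge> A / 2"
  by linarith

lemma case_a:
  assumes sm: "smooth_fun \<tau>" and q0: "2 * y0 - of_int m - x \<noteq> 0"
  shows "\<exists>e>0. \<forall>N::nat. \<exists>C. \<forall>y \<eta> h. dist (y, \<eta>) (y0, \<eta>0) < e \<longrightarrow> 0 < h \<longrightarrow> h \<le> 1 \<longrightarrow>
     norm (integral {y0 - 1/2..y0 + 1/2} (\<lambda>z. exp (Psi \<tau> x \<xi> m y \<eta> z / complex_of_real h))) \<le> C * h ^ N"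
proof -
  define q where "q = \<bar>2 * y0 - of_int m - x\<bar>"
  have qp: "q > 0" using q0 unfolding q_def by simp
  define c where "c = q\<^sup>2 / 80"
  have cp: "c > 0" using qp unfolding c_def by simp
  show ?thesis
  proof (rule exI[of _ "q / 4"], intro conjI allI)
    show "q / 4 > 0" using qp by simp
    fix N :: nat
    obtain C where C: "\<forall>h>0. exp (-c/h) \<le> C * h ^ N" using expsmall[OF cp] by blast
    show "\<exists>C. \<forall>y \<eta> h. dist (y, \<eta>) (y0, \<eta>0) < q / 4 \<longrightarrow> 0 < h \<longrightarrow> h \<le> 1 \<longrightarrow>
     norm (integral {y0 - 1/2..y0 + 1/2} (\<lambda>z. exp (Psi \<tau> x \<xi> m y \<eta> z / complex_of_real h))) \<le> C * h ^ N"
    proof (intro exI[of _ C] allI impI)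
      fix y \<eta> h :: real assume d: "dist (y, \<eta>) (y0, \<eta>0) < q / 4" and h: "0 < h" "h \<le> 1"
      have "\<bar>y - y0\<bar> < q / 4" using dist_fst_le[of "(y, \<eta>)" "(y0, \<eta>0)"] d by (simp add: dist_real_def)
      moreover have t: "\<bar>(2 * y - of_int m - x) + 2 * (y0 - y)\<bar> \<le> \<bar>2 * y - of_int m - x\<bar> + \<bar>2 * (y0 - y)\<bar>"
        by (rule abs_triangle_ineq)
      have "(2 * y - of_int m - x) + 2 * (y0 - y) = 2 * y0 - of_int m - x" by simp
      with t have "\<bar>2 * y0 - of_int m - x\<bar> \<le> \<bar>2 * y - of_int m - x\<bar> + \<bar>2 * (y0 - y)\<bar>" by simp
      moreover have "\<bar>2 * (y0 - y)\<bar> = 2 * \<bar>y - y0\<bar>" by (simp only: abs_mult abs_minus_commute abs_numeral)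
      ultimately have qy: "\<bar>2 * y - of_int m - x\<bar> \<ge> q / 2" unfolding q_def by (rule aux_lin)
      have bnd: "norm (exp (Psi \<tau> x \<xi> m y \<eta> z / complex_of_real h)) \<le> exp (-c/h)" for z
      proof -
        have "\<bar>2 * y - of_int m - x\<bar>\<^sup>2 \<ge> (q / 2)\<^sup>2"
          using qy qp by (intro power_mono) auto
        then have "(2 * y - of_int m - x)\<^sup>2 \<ge> q\<^sup>2 / 4" by (simp add: power_divide)
        moreover have eq: "2 * (z - y) + (2 * y - of_int m - x) = 2 * z - of_int m - x" by simp
        have "(z - y)\<^sup>2 + (2 * (z - y) + (2 * y - of_int m - x))\<^sup>2 \<ge> (2 * y - of_int m - x)\<^sup>2 / 5"
          by (rule sq_ineq)
        then have "(z - y)\<^sup>2 + (2 * z - of_int m - x)\<^sup>2 \<ge> (2 * y - of_int m - x)\<^sup>2 / 5"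
          unfolding eq .
        ultimately have "(z - y)\<^sup>2 + (2 * z - of_int m - x)\<^sup>2 \<ge> q\<^sup>2 / 20" by linarith
        then have "Re (Psi \<tau> x \<xi> m y \<eta> z) \<le> - c" unfolding Re_Psi c_def by simp
        then have "Re (Psi \<tau> x \<xi> m y \<eta> z) / h \<le> - c / h" using h by (intro divide_right_mono) auto
        then show ?thesis unfolding norm_expPsi[OF h(1)] by simp
      qed
      have "norm (integral {y0 - 1/2..y0 + 1/2} (\<lambda>z. exp (Psi \<tau> x \<xi> m y \<eta> z / complex_of_real h)))
            \<le> exp (-c/h) * ((y0 + 1/2) - (y0 - 1/2))"
        by (rule int_norm_bound[OF expPsi_integrable[OF sm]]) (use bnd h in auto)
      also have "\<dots> = exp (-c/h)" by simp
      also have "\<dots> \<le> C * h ^ N" using C h by blast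
      finally show "norm (integral {y0 - 1/2..y0 + 1/2} (\<lambda>z. exp (Psi \<tau> x \<xi> m y \<eta> z / complex_of_real h))) \<le> C * h ^ N" .
    qed
  qed
qed

lemma T1: "9/64 \<le> (A::real) \<Longrightarrow> 0 \<le> B \<Longrightarrow> R = -(A + B)/4 \<Longrightarrow> R \<le> -(9/256)" by (simp add: field_simps)

lemma norm_ri_le: "norm (complex_of_real a + \<i> * complex_of_real b) \<le> \<bar>a\<bar> + \<bar>b\<bar>"
proof -
  have "norm (complex_of_real a + \<i> * complex_of_real b) \<le> norm (complex_of_real a) + norm (\<i> * complex_of_real b)"
    by (rule norm_triangle_ineq)
  also have "\<dots> = \<bar>a\<bar> + \<bar>b\<bar>" by (simp add: norm_mult)
  finally show ?thesis .
qed

lemma Sn_constc: "Sn P W n (\<lambda>p z. c)"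
  by (rule Sn_const) (rule exI[of _ "norm c"], simp)

lemma aux_abs3: "D/2 \<le> \<bar>v\<bar>" if "\<bar>a::real\<bar> < D/4" "\<bar>b\<bar> < D/4" "D = \<bar>u\<bar>" "u = v - a + b"
proof -
  have "\<bar>u\<bar> \<le> \<bar>v\<bar> + \<bar>a\<bar> + \<bar>b\<bar>" unfolding \<open>u = v - a + b\<close> by linarith
  then show ?thesis using that by linarith
qed

lemma case_b:
  assumes sm: "smooth_fun \<tau>" and m: "2 * y0 - of_int m - x = 0"
    and A: "2 * \<xi> + deriv \<tau> y0 - \<eta>0 \<noteq> 0"
  shows "\<exists>e>0. \<forall>N::nat. \<exists>C. \<forall>y \<eta> h. dist (y, \<eta>) (y0, \<eta>0) < e \<longrightarrow> 0 < h \<longrightarrow> h \<le> 1 \<longrightarrow>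
     norm (integral {y0 - 1/2..y0 + 1/2} (\<lambda>z. exp (Psi \<tau> x \<xi> m y \<eta> z / complex_of_real h))) \<le> C * h ^ N"
proof -
  define A' where "A' = \<bar>2 * \<xi> + deriv \<tau> y0 - \<eta>0\<bar>"
  have A'p: "A' > 0" using A unfolding A'_def by simp
  have "isCont (deriv \<tau>) y0"
    using DERIV_isCont[OF tau_deriv[OF sm, of 1 y0]] by simp
  from LIM_D[OF isContD[OF this], of "A'/4"] A'p
  obtain s where s: "s > 0" "\<And>w. w \<noteq> y0 \<and> norm (w - y0) < s \<Longrightarrow> norm (deriv \<tau> w - deriv \<tau> y0) < A'/4"
    by auto
  have s': "\<bar>deriv \<tau> w - deriv \<tau> y0\<bar> < A'/4" if "\<bar>w - y0\<bar> < s" for w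
    using s(2)[of w] that A'p by (cases "w = y0") auto
  define \<rho> where "\<rho> = min (s/2) (1/8)"
  have \<rho>: "\<rho> > 0" "2 * \<rho> \<le> s" "\<rho> \<le> 1/8" unfolding \<rho>_def using s by auto
  define e where "e = min \<rho> (A'/4)"
  have e: "e > 0" "e \<le> \<rho>" "e \<le> A'/4" unfolding e_def using \<rho> A'p by auto
  define c where "c = min (A'/2) (2 * \<rho>)"
  have c: "c > 0" unfolding c_def using \<rho> A'p by auto
  define c' :: real where "c' = 9/256"
  define a where "a = y0 - 1/2"
  define b where "b = y0 + 1/2"
  have ab: "a \<le> b" unfolding a_def b_def by simp
  define P where "P = {p. dist p (y0, \<eta>0) < e}"
  have Pd: "\<bar>fst p - y0\<bar> < e" "\<bar>snd p - \<eta>0\<bar> < e" if "p \<in> P" for p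
    using that dist_fst_le[of p "(y0, \<eta>0)"] dist_snd_le[of p "(y0, \<eta>0)"]
    unfolding P_def by (auto simp: dist_real_def)
  define \<Psi> where "\<Psi> = (\<lambda>p. Psi \<tau> x \<xi> m (fst p) (snd p))"
  define \<Psi>d where "\<Psi>d = (\<lambda>p. Psid \<tau> x \<xi> m (fst p) (snd p))"
  have dPsi: "(\<Psi> p has_vector_derivative \<Psi>d p z) (at z within {a..b})" for p z
    unfolding \<Psi>_def \<Psi>d_def by (rule Psi_deriv[OF sm])
  define K where "K = (\<lambda>p. complex_of_real ((fst p + 2 * of_int m + 2 * x) / 2) + \<i> * complex_of_real (2 * \<xi> - snd p))"
  have Keq: "\<Psi>d p z = K p + (complex_of_real (-5/2) * complex_of_real z + \<i> * complex_of_real ((deriv ^^ 1) \<tau> z))" for p z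
    unfolding \<Psi>d_def K_def Psid_def by (simp add: complex_eq_iff field_simps)
  have Kb: "\<exists>B. \<forall>p\<in>P. norm (K p) \<le> B"
  proof (intro exI ballI)
    fix p assume p: "p \<in> P"
    have "norm (K p) \<le> \<bar>(fst p + 2 * of_int m + 2 * x) / 2\<bar> + \<bar>2 * \<xi> - snd p\<bar>"
      unfolding K_def by (rule norm_ri_le)
    also have "\<dots> \<le> (\<bar>y0\<bar> + 1 + 2 * \<bar>of_int m\<bar> + 2 * \<bar>x\<bar>) + (2 * \<bar>\<xi>\<bar> + \<bar>\<eta>0\<bar> + 1)"
      using Pd[OF p] e \<rho> by (intro add_mono) (simp_all add: abs_le_iff, linarith+)
    finally show "norm (K p) \<le> (\<bar>y0\<bar> + 1 + 2 * \<bar>of_int m\<bar> + 2 * \<bar>x\<bar>) + (2 * \<bar>\<xi>\<bar> + \<bar>\<eta>0\<bar> + 1)" .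
  qed
  have SPsi: "Sn P {a..b} n \<Psi>d" for n
  proof -
    have "Sn P {a..b} n (\<lambda>p z. K p + (complex_of_real (-5/2) * complex_of_real z + \<i> * complex_of_real ((deriv ^^ 1) \<tau> z)))"
      by (intro Sn_add Sn_const[OF Kb] Sn_mult Sn_id Sn_tau[OF sm] Sn_constc)
    then show ?thesis by (rule Sn_cong) (simp add: Keq)
  qed
  have low: "norm (\<Psi>d p z) \<ge> c" if p: "p \<in> P" and z: "z \<in> {a..b}" for p z
  proof (cases "\<bar>z - y0\<bar> < 2 * \<rho>")
    case True
    then have "\<bar>deriv \<tau> z - deriv \<tau> y0\<bar> < A'/4" using s' \<rho> by auto
    moreover have "\<bar>snd p - \<eta>0\<bar> < A'/4" using Pd[OF p] e by linarith
    ultimately have "\<bar>2 * \<xi> + deriv \<tau> z - snd p\<bar> \<ge> A'/2" 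
      by (rule aux_abs3) (simp_all add: A'_def)
    moreover have "Im (\<Psi>d p z) = 2 * \<xi> + deriv \<tau> z - snd p" unfolding \<Psi>d_def Psid_def by simp
    ultimately have "\<bar>Im (\<Psi>d p z)\<bar> \<ge> c" unfolding c_def by linarith
    then show ?thesis using abs_Im_le_cmod[of "\<Psi>d p z"] by linarith
  next
    case False
    have r1: "Re (\<Psi>d p z) = - (5 * z - fst p - 2 * of_int m - 2 * x) / 2" unfolding \<Psi>d_def Psid_def by simp
    have r2: "5 * z - fst p - 2 * of_int m - 2 * x = 5 * (z - y0) - (fst p - y0)" using m by (smt (verit))
    have "Re (\<Psi>d p z) = - (5 * (z - y0) - (fst p - y0)) / 2" using r1 r2 by simp
    moreover have "\<bar>fst p - y0\<bar> < \<rho>" using Pd[OF p] e by linarith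
    ultimately have "\<bar>Re (\<Psi>d p z)\<bar> \<ge> 2 * \<rho>" using False \<rho> by (simp add: abs_if split: if_splits)
    then have "\<bar>Re (\<Psi>d p z)\<bar> \<ge> c" unfolding c_def by linarith
    then show ?thesis using abs_Re_le_cmod[of "\<Psi>d p z"] by linarith
  qed
  have re: "Re (\<Psi> p z) \<le> 0" for p z
    unfolding \<Psi>_def Re_Psi by (simp add: add_nonneg_nonneg)
  have endp: "Re (\<Psi> p w) \<le> - c'" if p: "p \<in> P" and w: "\<bar>w - y0\<bar> = 1/2" for p w
  proof -
    have "\<bar>w - fst p\<bar> \<ge> 3/8" using Pd[OF p] e \<rho> w by linarith
    then have "(3/8)\<^sup>2 \<le> \<bar>w - fst p\<bar>\<^sup>2" by (intro power_mono) auto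
    then have "9/64 \<le> (w - fst p)\<^sup>2" by (simp add: power2_eq_square)
    moreover have "0 \<le> (2 * w - of_int m - x)\<^sup>2" by simp
    moreover have "Re (\<Psi> p w) = - ((w - fst p)\<^sup>2 + (2 * w - of_int m - x)\<^sup>2) / 4"
      unfolding \<Psi>_def by (rule Re_Psi)
    ultimately show ?thesis unfolding c'_def by (rule T1)
  qed
  show ?thesis
  proof (rule exI[of _ e], intro conjI allI)
    show "e > 0" by (rule e(1))
    fix N :: nat
    have "\<exists>C. \<forall>p\<in>P. \<forall>h. 0 < h \<and> h \<le> 1 \<longrightarrow>
            norm (integral {a..b} (\<lambda>z. (\<lambda>p z. 1) p z * exp (\<Psi> p z / of_real h))) \<le> C * (h ^ N + exp (-c'/h))"
    proof (rule ibp_bound[OF ab dPsi SPsi c low re])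
      show "Re (\<Psi> p a) \<le> - c'" if "p \<in> P" for p using endp[OF that] unfolding a_def by simp
      show "Re (\<Psi> p b) \<le> - c'" if "p \<in> P" for p using endp[OF that] unfolding b_def by simp
      show "Sn P {a..b} N (\<lambda>p z. 1)" by (rule Sn_const) auto
    qed
    then obtain C where C: "\<forall>p\<in>P. \<forall>h. 0 < h \<and> h \<le> 1 \<longrightarrow>
            norm (integral {a..b} (\<lambda>z. exp (\<Psi> p z / of_real h))) \<le> C * (h ^ N + exp (-c'/h))"
      by auto
    obtain C2 where C2: "\<forall>h>0. exp (-c'/h) \<le> C2 * h ^ N" using expsmall[of c' N] unfolding c'_def by auto
    show "\<exists>C. \<forall>y \<eta> h. dist (y, \<eta>) (y0, \<eta>0) < e \<longrightarrow> 0 < h \<longrightarrow> h \<le> 1 \<longrightarrow>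
     norm (integral {y0 - 1/2..y0 + 1/2} (\<lambda>z. exp (Psi \<tau> x \<xi> m y \<eta> z / complex_of_real h))) \<le> C * h ^ N"
    proof (intro exI[of _ "max C 0 * (1 + max C2 0)"] allI impI)
      fix y \<eta> h :: real assume d: "dist (y, \<eta>) (y0, \<eta>0) < e" and h: "0 < h" "h \<le> 1"
      have p: "(y, \<eta>) \<in> P" unfolding P_def using d by simp
      have "norm (integral {y0 - 1/2..y0 + 1/2} (\<lambda>z. exp (Psi \<tau> x \<xi> m y \<eta> z / complex_of_real h)))
          \<le> C * (h ^ N + exp (-c'/h))" using C p h unfolding \<Psi>_def a_def b_def by auto
      also have "\<dots> \<le> max C 0 * (h ^ N + exp (-c'/h))" using h by (intro mult_right_mono) auto
      also have "\<dots> \<le> max C 0 * (h ^ N + max C2 0 * h ^ N)"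
        using C2 h by (intro mult_left_mono add_mono) (auto intro: order_trans[OF _ mult_right_mono])
      also have "\<dots> = max C 0 * (1 + max C2 0) * h ^ N" by (simp add: algebra_simps)
      finally show "norm (integral {y0 - 1/2..y0 + 1/2} (\<lambda>z. exp (Psi \<tau> x \<xi> m y \<eta> z / complex_of_real h)))
          \<le> max C 0 * (1 + max C2 0) * h ^ N" .
    qed
  qed
qed

definition QQ :: "(real \<Rightarrow> real) \<Rightarrow> real \<Rightarrow> real \<Rightarrow> real \<Rightarrow> real \<Rightarrow> int \<Rightarrow> real \<Rightarrow> bool" where
  "QQ \<tau> x \<xi> y0 \<eta>0 m e \<longleftrightarrow> (\<forall>N::nat. \<exists>C. \<forall>y \<eta> h. dist (y, \<eta>) (y0, \<eta>0) < e \<longrightarrow> 0 < h \<longrightarrow> h \<le> 1 \<longrightarrow>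
     norm (integral {y0 - 1/2..y0 + 1/2} (\<lambda>z. exp (Psi \<tau> x \<xi> m y \<eta> z / complex_of_real h))) \<le> C * h ^ N)"

lemma QQ_mono: "QQ \<tau> x \<xi> y0 \<eta>0 m e \<Longrightarrow> e' \<le> e \<Longrightarrow> QQ \<tau> x \<xi> y0 \<eta>0 m e'"
  unfolding QQ_def by (meson less_le_trans)

lemma per_m:
  assumes sm: "smooth_fun \<tau>" and x: "x \<in> {0..<1}" and y0: "y0 \<in> {0..<1}"
    and notin: "(y0, \<eta>0) \<notin> {(x / 2, 2 * \<xi> + deriv \<tau> (x / 2)), (x / 2 + 1 / 2, 2 * \<xi> + deriv \<tau> (x / 2 + 1 / 2))}"
  shows "\<exists>e>0. QQ \<tau> x \<xi> y0 \<eta>0 m e"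
proof (cases "2 * y0 - of_int m - x = 0")
  case False
  then show ?thesis using case_a[OF sm False] unfolding QQ_def by blast
next
  case True
  have "(-1::real) < of_int m" "of_int m < (2::real)" using True x y0 by auto
  then have m01: "m = 0 \<or> m = 1" by linarith
  have "2 * \<xi> + deriv \<tau> y0 - \<eta>0 \<noteq> 0"
  proof
    assume eq: "2 * \<xi> + deriv \<tau> y0 - \<eta>0 = 0"
    from m01 show False
    proof
      assume "m = 0"
      then have y: "y0 = x / 2" using True by simp
      have e2: "\<eta>0 = 2 * \<xi> + deriv \<tau> y0" using eq by linarith
      have "(y0, \<eta>0) = (x / 2, 2 * \<xi> + deriv \<tau> (x / 2))" unfolding e2 y ..
      then show False using notin by blast
    next
      assume "m = 1"
      then have y: "y0 = x / 2 + 1 / 2" using True by simp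
      have e2: "\<eta>0 = 2 * \<xi> + deriv \<tau> y0" using eq by linarith
      have "(y0, \<eta>0) = (x / 2 + 1 / 2, 2 * \<xi> + deriv \<tau> (x / 2 + 1 / 2))" unfolding e2 y ..
      then show False using notin by blast
    qed
  qed
  then show ?thesis using case_b[OF sm True] unfolding QQ_def by blast
qed

lemma all_m:
  assumes "finite M" "\<And>m. m \<in> M \<Longrightarrow> \<exists>e>0. QQ \<tau> x \<xi> y0 \<eta>0 m e"
  shows "\<exists>e>0. e \<le> 1/8 \<and> (\<forall>m\<in>M. QQ \<tau> x \<xi> y0 \<eta>0 m e)"
proof -
  obtain ef where ef: "\<forall>m\<in>M. ef m > 0 \<and> QQ \<tau> x \<xi> y0 \<eta>0 m (ef m)"
    using assms(2) by metis
  define e where "e = Min (insert (1/8) (ef ` M))"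
  have fin: "finite (insert (1/8) (ef ` M))" using assms(1) by simp
  have "e > 0" unfolding e_def using fin ef by (subst Min_gr_iff) auto
  moreover have "e \<le> 1/8" unfolding e_def using fin by (intro Min_le) auto
  moreover have "QQ \<tau> x \<xi> y0 \<eta>0 m e" if "m \<in> M" for m
  proof -
    have "e \<le> ef m" unfolding e_def using fin that by (intro Min_le) auto
    then show ?thesis using ef that QQ_mono by blast
  qed
  ultimately show ?thesis by blast
qed

lemma far_k:
  fixes k :: int and t :: real
  assumes "\<bar>t\<bar> \<le> 5/8" "k \<noteq> 0"
  shows "3/8 \<le> \<bar>t - of_int k\<bar>"
proof -
  have "k \<ge> 1 \<or> k \<le> -1" using assms(2) by linarith
  then have "real_of_int k \<ge> 1 \<or> real_of_int k \<le> -1" by (metis of_int_le_iff of_int_1 of_int_minus)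
  then show ?thesis
  proof
    assume "real_of_int k \<ge> 1" then show ?thesis using assms(1) by linarith
  next
    assume "real_of_int k \<le> -1" then show ?thesis using assms(1) by linarith
  qed
qed

lemma far_m:
  fixes k n0 :: int and t c0 :: real
  assumes "c0 - 1 \<le> t" "t \<le> c0 + 1" "n0 = floor c0" "k \<notin> {n0 - 2..n0 + 2}"
  shows "1 \<le> \<bar>t - of_int k\<bar>"
proof -
  have n: "real_of_int n0 \<le> c0" "c0 < real_of_int n0 + 1" using assms(3) by linarith+
  have "k \<ge> n0 + 3 \<or> k \<le> n0 - 3" using assms(4) by auto
  then have "real_of_int k \<ge> real_of_int n0 + 3 \<or> real_of_int k \<le> real_of_int n0 - 3"
    by (metis of_int_add of_int_diff of_int_le_iff of_int_numeral)
  then show ?thesis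
  proof
    assume "real_of_int k \<ge> real_of_int n0 + 3" then show ?thesis using assms(1,2) n by linarith
  next
    assume "real_of_int k \<le> real_of_int n0 - 3" then show ?thesis using assms(1,2) n by linarith
  qed
qed

lemma norm_gk_le1: "h > 0 \<Longrightarrow> norm (gk h x \<xi> k z) \<le> 1"
  unfolding norm_gk by simp

lemma pointwise:
  assumes h: "0 < h" "h \<le> 1" and z: "z \<in> {y0 - 1/2..y0 + 1/2}" and y: "\<bar>y - y0\<bar> < 1/8"
    and M: "M = {floor (2 * y0 - x) - 2..floor (2 * y0 - x) + 2}"
  shows "norm (integrand \<tau> x \<xi> h y \<eta> z - (\<Sum>m\<in>M. exp (Psi \<tau> x \<xi> m y \<eta> z / complex_of_real h)))
           \<le> (K0 * K0 + K0) * exp (-(9/512) / h)"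
proof -
  define A where "A = wavepacket h y \<eta> z"
  define A0 where "A0 = gk h y \<eta> 0 z"
  define B where "B = wavepacket h x \<xi> (2 * z)"
  define B0 where "B0 = (\<Sum>m\<in>M. gk h x \<xi> m (2 * z))"
  define E where "E = exp (\<i> * complex_of_real ((1 / h) * \<tau> z))"
  define \<epsilon> where "\<epsilon> = exp (-(9/512) / h)"
  have finM: "finite M" unfolding M by simp
  have nE: "norm E = 1" unfolding E_def by simp
  have dA: "norm (A - A0) \<le> K0 * \<epsilon>"
  proof -
    have "norm (wavepacket h y \<eta> z - (\<Sum>k\<in>{0}. gk h y \<eta> k z)) \<le> K0 * exp (-((3/8)\<^sup>2) / (8*h))"
    proof (rule wp_decomp[OF h])
      fix k :: int assume "k \<notin> {0}"
      moreover have "\<bar>z - y\<bar> \<le> 5/8"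
      proof -
        have "y0 - 1/2 \<le> z" "z \<le> y0 + 1/2" using z by auto
        then show ?thesis using y by linarith
      qed
      ultimately show "3/8 \<le> \<bar>(z - y) - of_int k\<bar>" using far_k by auto
    qed auto
    moreover have "-((3/8::real)\<^sup>2) / (8*h) = -(9/512) / h" by (simp add: power2_eq_square)
    ultimately show ?thesis unfolding A_def A0_def \<epsilon>_def by simp
  qed
  have dB: "norm (B - B0) \<le> K0 * \<epsilon>"
  proof -
    have "norm (wavepacket h x \<xi> (2 * z) - (\<Sum>k\<in>M. gk h x \<xi> k (2 * z))) \<le> K0 * exp (-(1\<^sup>2) / (8*h))"
    proof (rule wp_decomp[OF h finM])
      fix k :: int assume "k \<notin> M"
      then show "1 \<le> \<bar>(2 * z - x) - of_int k\<bar>"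
        using far_m[of "2 * y0 - x" "2 * z - x" "floor (2 * y0 - x)" k] z M by auto
    qed auto
    moreover have "exp (-(1\<^sup>2) / (8*h)) \<le> \<epsilon>" unfolding \<epsilon>_def using h by (simp add: field_simps)
    ultimately show ?thesis unfolding B_def B0_def using K0_pos
      by (smt (verit, best) mult_left_mono)
  qed
  have nA0: "norm A0 \<le> 1" unfolding A0_def using norm_gk_le1[OF h(1)] .
  have nB: "norm B \<le> K0" unfolding B_def by (rule wp_bound[OF h])
  have sum_eq: "(\<Sum>m\<in>M. exp (Psi \<tau> x \<xi> m y \<eta> z / complex_of_real h)) = cnj A0 * (B0 * E)"
  proof -
    have "(\<Sum>m\<in>M. exp (Psi \<tau> x \<xi> m y \<eta> z / complex_of_real h)) = (\<Sum>m\<in>M. cnj A0 * (gk h x \<xi> m (2 * z) * E))"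
      unfolding A0_def E_def using main_term[OF h(1)] by simp
    also have "\<dots> = cnj A0 * (B0 * E)" unfolding B0_def by (simp add: sum_distrib_left sum_distrib_right)
    finally show ?thesis .
  qed
  have "integrand \<tau> x \<xi> h y \<eta> z - (\<Sum>m\<in>M. exp (Psi \<tau> x \<xi> m y \<eta> z / complex_of_real h))
      = (cnj A - cnj A0) * B * E + cnj A0 * (B - B0) * E"
    unfolding sum_eq integrand_def A_def B_def E_def by (simp add: algebra_simps)
  also have "norm \<dots> \<le> norm (A - A0) * norm B + norm A0 * norm (B - B0)"
  proof -
    have "norm ((cnj A - cnj A0) * B * E + cnj A0 * (B - B0) * E) \<le> norm ((cnj A - cnj A0) * B * E) + norm (cnj A0 * (B - B0) * E)"
      by (rule norm_triangle_ineq)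
    also have "\<dots> = norm (A - A0) * norm B + norm A0 * norm (B - B0)"
      by (simp add: norm_mult nE complex_cnj_diff[symmetric] del: complex_cnj_diff)
    finally show ?thesis .
  qed
  also have "\<dots> \<le> (K0 * \<epsilon>) * K0 + 1 * (K0 * \<epsilon>)"
    using dA dB nA0 nB K0_pos by (intro add_mono mult_mono) (auto simp: \<epsilon>_def)
  also have "\<dots> = (K0 * K0 + K0) * \<epsilon>" by (simp add: algebra_simps)
  finally show ?thesis unfolding \<epsilon>_def .
qed

lemma small:
  assumes sm: "smooth_fun \<tau>" and per: "\<forall>z. \<tau> (z + 1) = \<tau> z" and x: "x \<in> {0..<1}"
    and y0: "y0 \<in> {0..<1}"
    and notin: "(y0, \<eta>0) \<notin> {(x / 2, 2 * \<xi> + deriv \<tau> (x / 2)), (x / 2 + 1 / 2, 2 * \<xi> + deriv \<tau> (x / 2 + 1 / 2))}"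
  shows "microlocally_small (\<lambda>h. Fhat \<tau> (1 / h) (wavepacket h x \<xi>)) y0 \<eta>0"
proof -
  define M where "M = {floor (2 * y0 - x) - 2..floor (2 * y0 - x) + 2}"
  have finM: "finite M" unfolding M_def by simp
  obtain e where e: "e > 0" "e \<le> 1/8" "\<forall>m\<in>M. QQ \<tau> x \<xi> y0 \<eta>0 m e"
    using all_m[OF finM per_m[OF sm x y0 notin]] by blast
  define W where "W = {y0 - 1/2..y0 + 1/2}"
  show ?thesis unfolding microlocally_small_def
  proof (rule exI[of _ e], intro conjI allI impI)
    show "e > 0" by (rule e(1))
    fix N :: real assume "N > 0"
    define N' where "N' = nat (ceiling N)"
    have NN': "N \<le> real N'" unfolding N'_def by linarith
    have "\<forall>m\<in>M. \<exists>C. \<forall>y \<eta> h. dist (y, \<eta>) (y0, \<eta>0) < e \<longrightarrow> 0 < h \<longrightarrow> h \<le> 1 \<longrightarrow>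
     norm (integral W (\<lambda>z. exp (Psi \<tau> x \<xi> m y \<eta> z / complex_of_real h))) \<le> C * h ^ N'"
      using e(3) unfolding QQ_def W_def by blast
    then obtain Cf where Cf: "\<forall>m\<in>M. \<forall>y \<eta> h. dist (y, \<eta>) (y0, \<eta>0) < e \<longrightarrow> 0 < h \<longrightarrow> h \<le> 1 \<longrightarrow>
     norm (integral W (\<lambda>z. exp (Psi \<tau> x \<xi> m y \<eta> z / complex_of_real h))) \<le> Cf m * h ^ N'"
      by metis
    obtain C3 where C3: "\<forall>h::real>0. exp (-(9/512)/h) \<le> C3 * h ^ N'" using expsmall[of "9/512" N'] by auto
    define Ctot where "Ctot = (\<Sum>m\<in>M. max (Cf m) 0) + (K0 * K0 + K0) * max C3 0"
    have Ctot0: "Ctot \<ge> 0" unfolding Ctot_def using K0_pos by (intro add_nonneg_nonneg sum_nonneg) auto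
    show "\<exists>C \<delta>. 0 < \<delta> \<and> (\<forall>h y \<eta>. 0 < h \<and> h \<le> \<delta> \<and> dist (y, \<eta>) (y0, \<eta>0) < e \<longrightarrow>
             norm (l2_inner (wavepacket h y \<eta>) ((\<lambda>h. Fhat \<tau> (1 / h) (wavepacket h x \<xi>)) h)) \<le> C * h powr N)"
    proof (rule exI[of _ Ctot], rule exI[of _ 1], intro conjI allI impI)
      show "(0::real) < 1" by simp
      fix h y \<eta> :: real assume H: "0 < h \<and> h \<le> 1 \<and> dist (y, \<eta>) (y0, \<eta>0) < e"
      then have h: "0 < h" "h \<le> 1" and d: "dist (y, \<eta>) (y0, \<eta>0) < e" by auto
      have yy: "\<bar>y - y0\<bar> < 1/8" using dist_fst_le[of "(y, \<eta>)" "(y0, \<eta>0)"] d e(2) by (simp add: dist_real_def)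
      define F where "F = integrand \<tau> x \<xi> h y \<eta>"
      have main: "norm (integral {0..1} F) \<le> Ctot * h ^ N'"
      proof (cases "F integrable_on {0..1}")
        case False
        then show ?thesis using Ctot0 h by (simp add: not_integrable_integral)
      next
        case True
        then have I0: "(F has_integral integral {0..1} F) {0..1}" by (rule integrable_integral)
        have IW: "(F has_integral integral {0..1} F) W"
        proof -
          have "(F has_integral integral {0..1} F) {y0 - 1/2..y0 - 1/2 + 1}"
            by (rule window_shift[OF _ I0]) (use integrand_periodic[OF per] y0 in \<open>auto simp: F_def\<close>)
          then show ?thesis unfolding W_def by (simp add: add.commute add_diff_eq)
        qed
        define J where "J = (\<lambda>m. integral W (\<lambda>z. exp (Psi \<tau> x \<xi> m y \<eta> z / complex_of_real h)))"
        have Hs: "((\<lambda>z. \<Sum>m\<in>M. exp (Psi \<tau> x \<xi> m y \<eta> z / complex_of_real h)) has_integral (\<Sum>m\<in>M. J m)) W"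
          unfolding J_def W_def using h
          by (intro has_integral_sum finM integrable_integral expPsi_integrable[OF sm]) auto
        have Hr: "((\<lambda>z. F z - (\<Sum>m\<in>M. exp (Psi \<tau> x \<xi> m y \<eta> z / complex_of_real h))) has_integral
                   (integral {0..1} F - (\<Sum>m\<in>M. J m))) W"
          by (rule has_integral_diff[OF IW Hs])
        have "norm (integral {0..1} F - (\<Sum>m\<in>M. J m)) \<le> ((K0 * K0 + K0) * exp (-(9/512) / h)) * ((y0 + 1/2) - (y0 - 1/2))"
        proof -
          have "norm (integral W (\<lambda>z. F z - (\<Sum>m\<in>M. exp (Psi \<tau> x \<xi> m y \<eta> z / complex_of_real h))))
                \<le> ((K0 * K0 + K0) * exp (-(9/512) / h)) * ((y0 + 1/2) - (y0 - 1/2))"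
            unfolding W_def
          proof (rule int_norm_bound)
            show "(\<lambda>z. F z - (\<Sum>m\<in>M. exp (Psi \<tau> x \<xi> m y \<eta> z / complex_of_real h))) integrable_on {y0 - 1/2..y0 + 1/2}"
              using Hr unfolding W_def by blast
            fix z assume z: "z \<in> {y0 - 1/2..y0 + 1/2}"
            show "norm (F z - (\<Sum>m\<in>M. exp (Psi \<tau> x \<xi> m y \<eta> z / complex_of_real h))) \<le> (K0 * K0 + K0) * exp (-(9/512) / h)"
              unfolding F_def by (rule pointwise[OF h z yy M_def])
          qed simp
          then show ?thesis using integral_unique[OF Hr] by simp
        qed
        also have "\<dots> = (K0 * K0 + K0) * exp (-(9/512) / h)" by simp
        also have "\<dots> \<le> (K0 * K0 + K0) * (max C3 0 * h ^ N')"
        proof -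
          have "exp (-(9/512) / h) \<le> max C3 0 * h ^ N'"
            using C3 h by (meson max.cobounded1 mult_right_mono order_trans zero_le_power less_imp_le)
          then show ?thesis using K0_pos by (intro mult_left_mono) auto
        qed
        finally have rem: "norm (integral {0..1} F - (\<Sum>m\<in>M. J m)) \<le> (K0 * K0 + K0) * max C3 0 * h ^ N'"
          by (simp add: mult.assoc)
        have sumb: "norm (\<Sum>m\<in>M. J m) \<le> (\<Sum>m\<in>M. max (Cf m) 0) * h ^ N'"
        proof -
          have "norm (\<Sum>m\<in>M. J m) \<le> (\<Sum>m\<in>M. norm (J m))" by (rule norm_sum)
          also have "\<dots> \<le> (\<Sum>m\<in>M. max (Cf m) 0 * h ^ N')"
          proof (rule sum_mono)
            fix m assume m: "m \<in> M"
            have "norm (J m) \<le> Cf m * h ^ N'" unfolding J_def using Cf m d h by blast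
            also have "\<dots> \<le> max (Cf m) 0 * h ^ N'" using h by (intro mult_right_mono) auto
            finally show "norm (J m) \<le> max (Cf m) 0 * h ^ N'" .
          qed
          also have "\<dots> = (\<Sum>m\<in>M. max (Cf m) 0) * h ^ N'" by (simp add: sum_distrib_right)
          finally show ?thesis .
        qed
        have "norm (integral {0..1} F) \<le> norm (\<Sum>m\<in>M. J m) + norm (integral {0..1} F - (\<Sum>m\<in>M. J m))"
          by (metis add.commute diff_add_cancel norm_triangle_ineq)
        also have "\<dots> \<le> (\<Sum>m\<in>M. max (Cf m) 0) * h ^ N' + (K0 * K0 + K0) * max C3 0 * h ^ N'"
          using sumb rem by (rule add_mono)
        also have "\<dots> = Ctot * h ^ N'" unfolding Ctot_def by (simp add: algebra_simps)
        finally show ?thesis .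
      qed
      have "h ^ N' \<le> h powr N"
      proof -
        have "h ^ N' = h powr (real N')" using h by (simp add: powr_realpow)
        also have "\<dots> \<le> h powr N" using h NN' by (intro powr_mono') auto
        finally show ?thesis .
      qed
      then have "Ctot * h ^ N' \<le> Ctot * h powr N" using Ctot0 by (rule mult_left_mono)
      with main show "norm (l2_inner (wavepacket h y \<eta>) ((\<lambda>h. Fhat \<tau> (1 / h) (wavepacket h x \<xi>)) h)) \<le> Ctot * h powr N"
        unfolding F_def by (simp add: l2_inner_integrand)
    qed
  qed
qed

theorem mainTheorem2:
  fixes \<tau> :: "real \<Rightarrow> real" and x \<xi> :: real
  assumes "smooth_fun \<tau>"
    and "\<forall>z. \<tau> (z + 1) = \<tau> z"
    and "x \<in> {0..<1}"
  shows "microsupport (\<lambda>h. Fhat \<tau> (1 / h) (wavepacket h x \<xi>))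
           \<subseteq> {(x / 2, 2 * \<xi> + deriv \<tau> (x / 2)),
               (x / 2 + 1 / 2, 2 * \<xi> + deriv \<tau> (x / 2 + 1 / 2))}"
proof
  fix p assume p: "p \<in> microsupport (\<lambda>h. Fhat \<tau> (1 / h) (wavepacket h x \<xi>))"
  obtain y0 \<eta>0 where pe: "p = (y0, \<eta>0)" by (cases p)
  have y0: "y0 \<in> {0..<1}" and ns: "\<not> microlocally_small (\<lambda>h. Fhat \<tau> (1 / h) (wavepacket h x \<xi>)) y0 \<eta>0"
    using p unfolding pe microsupport_def by auto
  show "p \<in> {(x / 2, 2 * \<xi> + deriv \<tau> (x / 2)), (x / 2 + 1 / 2, 2 * \<xi> + deriv \<tau> (x / 2 + 1 / 2))}"
    using small[OF assms y0] ns unfolding pe by blast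
qed

end
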